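(* Let $\Sigma=(X,\mathcal{S},\phi)$ be a forward complete dynamical system. Let $t_1>0$, $G_0>0$, and let $\beta$ be a function of class $\mathcal{K}_\infty$ such that $\limsup_{r\downarrow 0}\frac{\beta(r)}{r}<+\infty$ and $$\|\phi(t,x,\sigma)\|\le G_0\,\beta(\|x\|)\quad \text{for all } t\in[0,t_1],\ x\in X,\ \sigma\in\mathcal{S}.$$ Then the following statements are equivalent: (i) $\Sigma$ is USGES; (ii) for every $p>0$ there exists a nondecreasing function $k:\mathbb{R}_+\to\mathbb{R}_+$ such that $$\int_0^{+\infty}\|\phi(t,x,\sigma)\|^p\,dt\le k(\|x\|)^p\|x\|^p\quad\text{for all } x\in X,\ \sigma\in\mathcal{S};$$ (iii) there exist $p>0$ and a nondecreasing function $k:\mathbb{R}_+\to\mathbb{R}_+$ such that the inequality in (ii) holds for all $x\in X$ and $\sigma\in\mathcal{S}$.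
   Context: $(X,\|\cdot\|)$ is a Banach space and $B_X(x,r)$ denotes the closed ball of center $x$ and radius $r$. A function $\alpha:\mathbb{R}_+\to\mathbb{R}_+$ is of class $\mathcal{K}$ if it is continuous, increasing and $\alpha(0)=0$; of class $\mathcal{K}_\infty$ if moreover unbounded. Let $\mathcal{Q}$ be a nonempty set and $\mathcal{S}$ a set of functions $\sigma:\mathbb{R}_+\to\mathcal{Q}$ which is closed by time-shift (for $\sigma\in\mathcal{S}$, $\tau\ge0$, the function $\mathbb{T}_\tau\sigma:s\mapsto\sigma(\tau+s)$ is in $\mathcal{S}$) and closed by concatenation (for $\sigma_1,\sigma_2\in\mathcal{S}$, $\tau>0$, the function equal to $\sigma_1$ on $[0,\tau]$ and with $\sigma(\tau+t)=\sigma_2(t)$ for $t>0$ is in $\mathcal{S}$). A triple $\Sigma=(X,\mathcal{S},\phi)$ with $\phi:\mathbb{R}_+\times X\times\mathcal{S}\to X$ is a forward complete dynamical system if: (i) $\phi(0,x,\sigma)=x$; (ii) if $\tilde\sigma=\sigma$ on $[0,t]$ then $\phi(t,x,\tilde\sigma)=\phi(t,x,\sigma)$; (iii) $t\mapsto\phi(t,x,\sigma)$ is continuous; (iv) $\phi(\tau,\phi(t,x,\sigma),\mathbb{T}_t\sigma)=\phi(t+\tau,x,\sigma)$ for all $t,\tau\ge0$, $x\in X$, $\sigma\in\mathcal{S}$. $\Sigma$ is uniformly semi-globally exponentially stable at the origin (USGES) if for every $r>0$ there exist $M(r)>0$, $\lambda(r)>0$ such that $\|\phi(t,x,\sigma)\|\le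 M(r)e^{-\lambda(r)t}\|x\|$ for all $t\ge0$, $x\in B_X(0,r)$, $\sigma\in\mathcal{S}$. *)

theory Defs
  imports "HOL-Analysis.Analysis" "HOL-Library.Liminf_Limsup"
begin

definition class_K :: "(real \<Rightarrow> real) \<Rightarrow> bool" where
  "class_K \<alpha> \<longleftrightarrow> continuous_on {0..} \<alpha> \<and> strict_mono_on {0..} \<alpha> \<and> \<alpha> 0 = 0
     \<and> (\<forall>r\<ge>0. \<alpha> r \<ge> 0)"

definition class_Kinf :: "(real \<Rightarrow> real) \<Rightarrow> bool" where
  "class_Kinf \<alpha> \<longleftrightarrow> class_K \<alpha> \<and> (\<forall>C. \<exists>r\<ge>0. \<alpha> r > C)"

text \<open>Input signals are functions real to 'q; only their values on [0,inf) matter.\<close>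
definition shift :: "real \<Rightarrow> (real \<Rightarrow> 'q) \<Rightarrow> (real \<Rightarrow> 'q)" where
  "shift \<tau> \<sigma> = (\<lambda>s. \<sigma> (\<tau> + s))"

definition concat_sig :: "(real \<Rightarrow> 'q) \<Rightarrow> real \<Rightarrow> (real \<Rightarrow> 'q) \<Rightarrow> (real \<Rightarrow> 'q)" where
  "concat_sig \<sigma>1 \<tau> \<sigma>2 = (\<lambda>s. if s \<le> \<tau> then \<sigma>1 s else \<sigma>2 (s - \<tau>))"

definition forward_complete_system ::
  "(real \<Rightarrow> 'q) set \<Rightarrow> (real \<Rightarrow> 'a::banach \<Rightarrow> (real \<Rightarrow> 'q) \<Rightarrow> 'a) \<Rightarrow> bool" where
  "forward_complete_system S \<phi> \<longleftrightarrow>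
     (\<forall>\<sigma>\<in>S. \<forall>\<tau>\<ge>0. shift \<tau> \<sigma> \<in> S) \<and>
     (\<forall>\<sigma>1\<in>S. \<forall>\<sigma>2\<in>S. \<forall>\<tau>>0. concat_sig \<sigma>1 \<tau> \<sigma>2 \<in> S) \<and>
     (\<forall>x. \<forall>\<sigma>\<in>S. \<phi> 0 x \<sigma> = x) \<and>
     (\<forall>t\<ge>0. \<forall>x. \<forall>\<sigma>\<in>S. \<forall>\<sigma>'\<in>S. (\<forall>s\<in>{0..t}. \<sigma>' s = \<sigma> s) \<longrightarrow> \<phi> t x \<sigma>' = \<phi> t x \<sigma>) \<and>
     (\<forall>x. \<forall>\<sigma>\<in>S. continuous_on {0..} (\<lambda>t. \<phi> t x \<sigma>)) \<and>
     (\<forall>t\<ge>0. \<forall>\<tau>\<ge>0. \<forall>x. \<forall>\<sigma>\<in>S. \<phi> \<tau> (\<phi> t x \<sigma>) (shift t \<sigma>) = \<phi> (t + \<tau>) x \<sigma>)"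

definition USGES ::
  "(real \<Rightarrow> 'q) set \<Rightarrow> (real \<Rightarrow> 'a::real_normed_vector \<Rightarrow> (real \<Rightarrow> 'q) \<Rightarrow> 'a) \<Rightarrow> bool" where
  "USGES S \<phi> \<longleftrightarrow> (\<forall>r>0. \<exists>M>0. \<exists>lam>0. \<forall>t\<ge>0. \<forall>x. norm x \<le> r \<longrightarrow>
       (\<forall>\<sigma>\<in>S. norm (\<phi> t x \<sigma>) \<le> M * exp (- lam * t) * norm x))"

definition integral_bound ::
  "(real \<Rightarrow> 'q) set \<Rightarrow> (real \<Rightarrow> 'a::real_normed_vector \<Rightarrow> (real \<Rightarrow> 'q) \<Rightarrow> 'a) \<Rightarrow> real \<Rightarrow> (real \<Rightarrow> real) \<Rightarrow> bool" where
  "integral_bound S \<phi> p k \<longleftrightarrow> (\<forall>x. \<forall>\<sigma>\<in>S.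
     (\<integral>\<^sup>+ t \<in> {0..}. ennreal (norm (\<phi> t x \<sigma>) powr p) \<partial>lborel)
       \<le> ennreal (k (norm x) powr p * norm x powr p))"

definition nondecr_nonneg :: "(real \<Rightarrow> real) \<Rightarrow> bool" where
  "nondecr_nonneg k \<longleftrightarrow> mono_on {0..} k \<and> (\<forall>r\<ge>0. k r \<ge> 0)"

end

theory Submission
  imports Defs
begin

lemma fcs_shift: "forward_complete_system S \<phi> \<Longrightarrow> \<sigma> \<in> S \<Longrightarrow> \<tau> \<ge> 0 \<Longrightarrow> shift \<tau> \<sigma> \<in> S"
  unfolding forward_complete_system_def by blast

lemma fcs_zero: "forward_complete_system S \<phi> \<Longrightarrow> \<sigma> \<in> S \<Longrightarrow> \<phi> 0 x \<sigma> = x"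
  unfolding forward_complete_system_def by blast

lemma fcs_cocycle: "forward_complete_system S \<phi> \<Longrightarrow> t \<ge> 0 \<Longrightarrow> \<tau> \<ge> 0 \<Longrightarrow> \<sigma> \<in> S \<Longrightarrow>
   \<phi> \<tau> (\<phi> t x \<sigma>) (shift t \<sigma>) = \<phi> (t + \<tau>) x \<sigma>"
  unfolding forward_complete_system_def by blast

lemma fcs_cont: "forward_complete_system S \<phi> \<Longrightarrow> \<sigma> \<in> S \<Longrightarrow> continuous_on {0..} (\<lambda>t. \<phi> t x \<sigma>)"
  unfolding forward_complete_system_def by blast

lemma beta_lin:
  assumes K: "class_K \<beta>" and lim: "Limsup (at_right 0) (\<lambda>r. ereal (\<beta> r / r)) < \<infinity>"
  shows "\<exists>L\<ge>0. \<forall>s. 0 \<le> s \<and> s \<le> R \<longrightarrow> \<beta> s \<le> L * s"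
proof -
  obtain B where B: "Limsup (at_right 0) (\<lambda>r. ereal (\<beta> r / r)) < ereal B"
    using lim ereal_dense2 by blast
  have "eventually (\<lambda>r. ereal (\<beta> r / r) < ereal B) (at_right (0::real))"
    using Limsup_lessD[OF B] .
  then obtain d where d: "d > 0" "\<And>r. r > 0 \<Longrightarrow> r < d \<Longrightarrow> \<beta> r / r < B"
    unfolding eventually_at_right[OF zero_less_one] by auto
  have b0: "\<beta> 0 = 0" and bnn: "\<And>r. r \<ge> 0 \<Longrightarrow> \<beta> r \<ge> 0" and sm: "strict_mono_on {0..} \<beta>"
    using K unfolding class_K_def by auto
  define L where "L = max (max B 0) (\<beta> R / d)"
  have "\<beta> s \<le> L * s" if s: "0 \<le> s" "s \<le> R" for s
  proof (cases "s = 0")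
    case True then show ?thesis using b0 by simp
  next
    case False
    then have sp: "s > 0" using s by simp
    show ?thesis
    proof (cases "s < d")
      case True
      then have "\<beta> s / s < B" using d sp by auto
      then have "\<beta> s < B * s" using sp by (simp add: divide_less_eq)
      moreover have "B * s \<le> L * s" using sp unfolding L_def by (intro mult_right_mono) auto
      ultimately show ?thesis by simp
    next
      case False
      have "\<beta> s \<le> \<beta> R" using strict_mono_onD[OF sm, of s R] s by (cases "s = R") auto
      also have "\<beta> R = (\<beta> R / d) * d" using d by simp
      also have "\<dots> \<le> (\<beta> R / d) * s" using False d bnn[of R] s by (intro mult_left_mono) auto
      also have "\<dots> \<le> L * s" using sp unfolding L_def by (intro mult_right_mono) auto
      finally show ?thesis .
    qed
  qed
  moreover have "L \<ge> 0" unfolding L_def by simp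
  ultimately show ?thesis by blast
qed

lemma int_lower:
  fixes f :: "real \<Rightarrow> real"
  assumes "\<And>\<tau>. \<tau> \<in> {a..b} \<Longrightarrow> c \<le> f \<tau>" "0 \<le> a" "a \<le> b" "0 \<le> c"
  shows "ennreal (c * (b - a)) \<le> (\<integral>\<^sup>+ \<tau> \<in> {0..}. ennreal (f \<tau>) \<partial>lborel)"
proof -
  have "ennreal (c * (b - a)) = (\<integral>\<^sup>+ \<tau>. ennreal c * indicator {a..b} \<tau> \<partial>lborel)"
    using assms by (simp add: nn_integral_cmult_indicator ennreal_mult)
  also have "\<dots> \<le> (\<integral>\<^sup>+ \<tau> \<in> {0..}. ennreal (f \<tau>) \<partial>lborel)"
  proof (rule nn_integral_mono)
    fix \<tau> :: real
    show "ennreal c * indicator {a..b} \<tau> \<le> ennreal (f \<tau>) * indicator {0..} \<tau>"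
    proof (cases "\<tau> \<in> {a..b}")
      case True
      then have "\<tau> \<in> {0..}" using assms by auto
      then show ?thesis using True assms(1)[OF True] by (simp add: ennreal_leI)
    qed simp
  qed
  finally show ?thesis .
qed

lemma powr_le_div:
  fixes a b t p :: real
  assumes "0 \<le> a" "0 \<le> b" "p > 0" "t > 0" "t * a powr p \<le> b powr p"
  shows "a \<le> b * t powr (-1/p)"
proof -
  have "(a * t powr (1/p)) powr p = a powr p * t"
    using assms by (simp add: powr_mult powr_powr)
  also have "\<dots> \<le> b powr p" using assms by (simp add: mult.commute)
  finally have "(a * t powr (1/p)) powr p \<le> b powr p" .
  have "a * t powr (1/p) \<le> b"
  proof (rule ccontr)
    assume "\<not> a * t powr (1/p) \<le> b"
    then have "b powr p < (a * t powr (1/p)) powr p"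
      using assms by (intro powr_less_mono2) auto
    then show False using \<open>(a * t powr (1/p)) powr p \<le> b powr p\<close> by simp
  qed
  then have "a \<le> b / t powr (1/p)" using assms by (simp add: le_divide_eq)
  then show ?thesis using assms by (simp add: powr_minus_divide powr_minus divide_inverse)
qed

context
  fixes S :: "(real \<Rightarrow> 'q) set"
    and \<phi> :: "real \<Rightarrow> 'a::banach \<Rightarrow> (real \<Rightarrow> 'q) \<Rightarrow> 'a"
    and t1 G0 :: real and \<beta> :: "real \<Rightarrow> real" and p :: real and k :: "real \<Rightarrow> real"
  assumes sys: "forward_complete_system S \<phi>"
    and t1: "t1 > 0" and G0: "G0 > 0"
    and beta: "class_K \<beta>"
    and beta_lim: "Limsup (at_right 0) (\<lambda>r. ereal (\<beta> r / r)) < \<infinity>"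
    and bound: "\<And>t x \<sigma>. t \<in> {0..t1} \<Longrightarrow> \<sigma> \<in> S \<Longrightarrow> norm (\<phi> t x \<sigma>) \<le> G0 * \<beta> (norm x)"
    and p: "p > 0" and kmono: "nondecr_nonneg k" and ib: "integral_bound S \<phi> p k"
begin

lemma ib_rho:
  assumes "norm y \<le> \<rho>" "\<sigma> \<in> S"
  shows "(\<integral>\<^sup>+ t \<in> {0..}. ennreal (norm (\<phi> t y \<sigma>) powr p) \<partial>lborel) \<le> ennreal (k \<rho> powr p * norm y powr p)"
proof -
  have "k (norm y) \<le> k \<rho>" "0 \<le> k (norm y)"
  proof -
    have m: "mono_on {0..} k" and nn: "\<forall>r\<ge>0. k r \<ge> 0" using kmono unfolding nondecr_nonneg_def by auto
    have "0 \<le> \<rho>" using assms(1) norm_ge_zero[of y] by linarith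
    then show "k (norm y) \<le> k \<rho>" using mono_onD[OF m, of "norm y" \<rho>] assms(1) by simp
    show "0 \<le> k (norm y)" using nn by simp
  qed
  then have "k (norm y) powr p * norm y powr p \<le> k \<rho> powr p * norm y powr p"
    using p by (intro mult_right_mono powr_mono2) auto
  then show ?thesis using ib assms unfolding integral_bound_def
    by (meson ennreal_leI order_trans)
qed

lemma window:
  assumes "\<sigma> \<in> S" "t \<ge> t1" "norm y \<le> \<rho>"
  shows "\<exists>\<tau>\<in>{t-t1..t}. t1 * norm (\<phi> \<tau> y \<sigma>) powr p \<le> k \<rho> powr p * norm y powr p"
proof -
  have cont: "continuous_on {t-t1..t} (\<lambda>\<tau>. norm (\<phi> \<tau> y \<sigma>))"
  proof -
    have "{t-t1..t} \<subseteq> {0..}" using assms by auto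
    from continuous_on_subset[OF fcs_cont[OF sys assms(1), of y] this]
    show ?thesis by (rule continuous_on_norm)
  qed
  have ne: "{t-t1..t} \<noteq> {}" using t1 by simp
  from continuous_attains_inf[OF compact_Icc ne cont]
  obtain \<tau>0 where \<tau>0: "\<tau>0 \<in> {t-t1..t}" "\<forall>\<tau>\<in>{t-t1..t}. norm (\<phi> \<tau>0 y \<sigma>) \<le> norm (\<phi> \<tau> y \<sigma>)"
    by blast
  have low: "\<And>\<tau>. \<tau> \<in> {t-t1..t} \<Longrightarrow> norm (\<phi> \<tau>0 y \<sigma>) powr p \<le> norm (\<phi> \<tau> y \<sigma>) powr p"
    using \<tau>0(2) p by (intro powr_mono2) auto
  have a0: "0 \<le> t - t1" using assms t1 by simp
  have "ennreal (norm (\<phi> \<tau>0 y \<sigma>) powr p * (t - (t - t1)))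
      \<le> (\<integral>\<^sup>+ \<tau> \<in> {0..}. ennreal (norm (\<phi> \<tau> y \<sigma>) powr p) \<partial>lborel)"
    by (rule int_lower[OF low a0]) (use t1 in auto)
  also have "\<dots> \<le> ennreal (k \<rho> powr p * norm y powr p)"
    using ib_rho assms by blast
  finally have le: "ennreal (norm (\<phi> \<tau>0 y \<sigma>) powr p * t1) \<le> ennreal (k \<rho> powr p * norm y powr p)"
    by simp
  have nn: "0 \<le> k \<rho> powr p * norm y powr p" by simp
  have "norm (\<phi> \<tau>0 y \<sigma>) powr p * t1 \<le> k \<rho> powr p * norm y powr p"
    using le ennreal_le_iff[OF nn] by blast
  then show ?thesis using \<tau>0 by (auto simp: mult.commute)
qed

lemma lin_bound:
  assumes "\<rho> \<ge> 0"
  shows "\<exists>C\<ge>1. \<forall>y \<sigma> t. norm y \<le> \<rho> \<longrightarrow> \<sigma> \<in> S \<longrightarrow> t \<ge> 0 \<longrightarrow> norm (\<phi> t y \<sigma>) \<le> C * norm y"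
proof -
  obtain L1 where L1: "L1 \<ge> 0" "\<And>s. 0 \<le> s \<Longrightarrow> s \<le> \<rho> \<Longrightarrow> \<beta> s \<le> L1 * s"
    using beta_lin[OF beta beta_lim, of \<rho>] by blast
  have k0: "k \<rho> \<ge> 0" using kmono assms unfolding nondecr_nonneg_def by auto
  define D where "D = k \<rho> * t1 powr (-1/p)"
  have D0: "D \<ge> 0" unfolding D_def using k0 by simp
  obtain L2 where L2: "L2 \<ge> 0" "\<And>s. 0 \<le> s \<Longrightarrow> s \<le> D * \<rho> \<Longrightarrow> \<beta> s \<le> L2 * s"
    using beta_lin[OF beta beta_lim, of "D * \<rho>"] by blast
  define C where "C = max 1 (max (G0 * L1) (G0 * L2 * D))"
  have "norm (\<phi> t y \<sigma>) \<le> C * norm y" if y: "norm y \<le> \<rho>" "\<sigma> \<in> S" "t \<ge> 0" for y \<sigma> t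
  proof (cases "t \<le> t1")
    case True
    then have "norm (\<phi> t y \<sigma>) \<le> G0 * \<beta> (norm y)" using bound y by auto
    also have "\<dots> \<le> G0 * (L1 * norm y)" using L1 y G0 by (intro mult_left_mono) auto
    also have "\<dots> \<le> C * norm y" unfolding C_def by (simp add: mult_right_mono mult.assoc[symmetric])
    finally show ?thesis .
  next
    case False
    obtain \<tau>0 where \<tau>0: "\<tau>0 \<in> {t-t1..t}" "t1 * norm (\<phi> \<tau>0 y \<sigma>) powr p \<le> k \<rho> powr p * norm y powr p"
      using window[of \<sigma> t y \<rho>] y False by auto
    have pm: "(k \<rho> * norm y) powr p = k \<rho> powr p * norm y powr p"
      using k0 by (simp add: powr_mult)
    have "norm (\<phi> \<tau>0 y \<sigma>) \<le> (k \<rho> * norm y) * t1 powr (-1/p)"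
      apply (rule powr_le_div[OF norm_ge_zero _ p t1])
      using k0 apply simp
      using \<tau>0(2) pm by simp
    then have n0: "norm (\<phi> \<tau>0 y \<sigma>) \<le> D * norm y" unfolding D_def by (simp add: ac_simps)
    also have "\<dots> \<le> D * \<rho>" using D0 y by (simp add: mult_left_mono)
    finally have n0': "norm (\<phi> \<tau>0 y \<sigma>) \<le> D * \<rho>" .
    have t0: "\<tau>0 \<ge> 0" using \<tau>0 False by auto
    have tt: "t - \<tau>0 \<ge> 0" using \<tau>0 by auto
    have "\<phi> t y \<sigma> = \<phi> (t - \<tau>0) (\<phi> \<tau>0 y \<sigma>) (shift \<tau>0 \<sigma>)"
      using fcs_cocycle[OF sys t0 tt y(2), of y] by simp
    then have "norm (\<phi> t y \<sigma>) \<le> G0 * \<beta> (norm (\<phi> \<tau>0 y \<sigma>))"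
      using bound[of "t - \<tau>0" "shift \<tau>0 \<sigma>"] fcs_shift[OF sys y(2) t0] \<tau>0 by auto
    also have "\<dots> \<le> G0 * (L2 * norm (\<phi> \<tau>0 y \<sigma>))"
      using L2 n0' G0 by (intro mult_left_mono) auto
    also have "\<dots> \<le> G0 * (L2 * (D * norm y))"
      using n0 G0 L2 by (intro mult_left_mono) auto
    also have "\<dots> = (G0 * L2 * D) * norm y" by simp
    also have "\<dots> \<le> C * norm y" unfolding C_def by (intro mult_right_mono) auto
    finally show ?thesis .
  qed
  moreover have "C \<ge> 1" unfolding C_def by simp
  ultimately show ?thesis by blast
qed

lemma half_step:
  assumes r: "r > 0"
  shows "\<exists>T>0. \<exists>C\<ge>1. (\<forall>y \<sigma> t. norm y \<le> r \<longrightarrow> \<sigma> \<in> S \<longrightarrow> t \<ge> 0 \<longrightarrow> norm (\<phi> t y \<sigma>) \<le> C * norm y)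
     \<and> (\<forall>y \<sigma>. norm y \<le> r \<longrightarrow> \<sigma> \<in> S \<longrightarrow> norm (\<phi> T y \<sigma>) \<le> norm y / 2)"
proof -
  obtain C1 where C1: "C1 \<ge> 1" "\<And>y \<sigma> t. norm y \<le> r \<Longrightarrow> \<sigma> \<in> S \<Longrightarrow> t \<ge> 0 \<Longrightarrow> norm (\<phi> t y \<sigma>) \<le> C1 * norm y"
    using lin_bound[of r] r by auto
  define R where "R = C1 * r"
  have R0: "R \<ge> 0" unfolding R_def using C1 r by simp
  obtain C2 where C2: "C2 \<ge> 1" "\<And>y \<sigma> t. norm y \<le> R \<Longrightarrow> \<sigma> \<in> S \<Longrightarrow> t \<ge> 0 \<Longrightarrow> norm (\<phi> t y \<sigma>) \<le> C2 * norm y"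
    using lin_bound[OF R0] by auto
  define K where "K = k r"
  have K0: "K \<ge> 0" using kmono r unfolding nondecr_nonneg_def K_def by auto
  define T where "T = (2 * C2 * (K + 1)) powr p"
  have T0: "T > 0" unfolding T_def using C2 K0 by simp
  have "norm (\<phi> T y \<sigma>) \<le> norm y / 2" if y: "norm y \<le> r" "\<sigma> \<in> S" for y \<sigma>
  proof -
    define a where "a = norm (\<phi> T y \<sigma>)"
    have a0: "a \<ge> 0" unfolding a_def by simp
    have low: "(a / C2) powr p \<le> norm (\<phi> \<tau> y \<sigma>) powr p" if \<tau>: "\<tau> \<in> {0..T}" for \<tau>
    proof -
      have t0: "\<tau> \<ge> 0" and tt: "T - \<tau> \<ge> 0" using \<tau> by auto
      have "norm (\<phi> \<tau> y \<sigma>) \<le> C1 * norm y" using C1(2)[OF y t0] .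
      also have "\<dots> \<le> R" unfolding R_def using C1 y by (intro mult_left_mono) auto
      finally have nR: "norm (\<phi> \<tau> y \<sigma>) \<le> R" .
      have "\<phi> T y \<sigma> = \<phi> (T - \<tau>) (\<phi> \<tau> y \<sigma>) (shift \<tau> \<sigma>)"
        using fcs_cocycle[OF sys t0 tt y(2), of y] by simp
      then have "a \<le> C2 * norm (\<phi> \<tau> y \<sigma>)"
        unfolding a_def using C2(2)[OF nR fcs_shift[OF sys y(2) t0] tt] by simp
      then have "a / C2 \<le> norm (\<phi> \<tau> y \<sigma>)" using C2 by (simp add: divide_le_eq mult.commute)
      then show ?thesis using a0 C2 p by (intro powr_mono2) auto
    qed
    have "ennreal ((a / C2) powr p * (T - 0)) \<le> (\<integral>\<^sup>+ \<tau> \<in> {0..}. ennreal (norm (\<phi> \<tau> y \<sigma>) powr p) \<partial>lborel)"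
      by (rule int_lower[OF low]) (use T0 in auto)
    also have "\<dots> \<le> ennreal (K powr p * norm y powr p)"
      unfolding K_def using ib_rho y by blast
    finally have le: "ennreal ((a / C2) powr p * T) \<le> ennreal (K powr p * norm y powr p)" by simp
    have nn: "0 \<le> K powr p * norm y powr p" by simp
    have "T * (a / C2) powr p \<le> K powr p * norm y powr p"
      using le ennreal_le_iff[OF nn] by (simp add: mult.commute)
    also have "\<dots> = (K * norm y) powr p" using K0 by (simp add: powr_mult)
    finally have "a / C2 \<le> (K * norm y) * T powr (-1/p)"
      using a0 C2 K0 p T0 by (intro powr_le_div) auto
    also have "T powr (-1/p) = 1 / (2 * C2 * (K + 1))"
    proof -
      have X0: "0 \<le> 2 * C2 * (K + 1)" using C2 K0 by simp
      have pp: "p * (-1/p) = -1" using p by simp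
      have "T powr (-1/p) = (2 * C2 * (K + 1)) powr (p * (-1/p))"
        unfolding T_def by (rule powr_powr)
      also have "\<dots> = (2 * C2 * (K + 1)) powr (- 1)" unfolding pp ..
      also have "\<dots> = 1 / (2 * C2 * (K + 1)) powr 1" by (rule powr_minus_divide)
      also have "(2 * C2 * (K + 1)) powr 1 = 2 * C2 * (K + 1)" by (rule powr_one[OF X0])
      finally show ?thesis .
    qed
    finally have a1: "a / C2 \<le> K * norm y * (1 / (2 * C2 * (K + 1)))" .
    define Z where "Z = K * norm y / (2 * (K + 1))"
    have C2nz: "C2 \<noteq> 0" and Kp: "K + 1 > 0" using C2 K0 by auto
    have "K * norm y * (1 / (2 * C2 * (K + 1))) = Z / C2"
      unfolding Z_def using C2nz Kp by simp
    with a1 have "a / C2 \<le> Z / C2" by simp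
    then have "a / C2 * C2 \<le> Z / C2 * C2" using C2 by (intro mult_right_mono) auto
    then have "a \<le> Z" using C2nz by simp
    also have "Z \<le> (K + 1) * norm y / (2 * (K + 1))"
      unfolding Z_def by (intro divide_right_mono mult_right_mono) (use K0 in auto)
    also have "\<dots> = norm y / 2" using Kp by (simp add: field_simps)
    finally show ?thesis unfolding a_def .
  qed
  then have H2: "\<forall>y \<sigma>. norm y \<le> r \<longrightarrow> \<sigma> \<in> S \<longrightarrow> norm (\<phi> T y \<sigma>) \<le> norm y / 2" by blast
  have H1: "\<forall>y \<sigma> t. norm y \<le> r \<longrightarrow> \<sigma> \<in> S \<longrightarrow> t \<ge> 0 \<longrightarrow> norm (\<phi> t y \<sigma>) \<le> C1 * norm y"
    using C1(2) by blast
  show ?thesis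
    apply (rule exI[of _ T], rule conjI[OF T0])
    apply (rule exI[of _ C1], rule conjI[OF C1(1)])
    using H1 H2 by (rule conjI)
qed

lemma iii_USGES: "USGES S \<phi>"
  unfolding USGES_def
proof (intro allI impI)
  fix r :: real assume r: "r > 0"
  obtain T C where T: "T > 0" and C: "C \<ge> 1"
    and lin: "\<And>y \<sigma> t. norm y \<le> r \<Longrightarrow> \<sigma> \<in> S \<Longrightarrow> t \<ge> 0 \<Longrightarrow> norm (\<phi> t y \<sigma>) \<le> C * norm y"
    and half: "\<And>y \<sigma>. norm y \<le> r \<Longrightarrow> \<sigma> \<in> S \<Longrightarrow> norm (\<phi> T y \<sigma>) \<le> norm y / 2"
    using half_step[OF r] by blast
  have iter: "norm (\<phi> (real n * T) y \<sigma>) \<le> (1/2)^n * norm y"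
    if "norm y \<le> r" "\<sigma> \<in> S" for n y \<sigma>
    using that
  proof (induction n arbitrary: y \<sigma>)
    case 0
    then show ?case using fcs_zero[OF sys] by simp
  next
    case (Suc n)
    have h: "norm (\<phi> T y \<sigma>) \<le> norm y / 2" using half Suc.prems by blast
    then have h': "norm (\<phi> T y \<sigma>) \<le> r" using Suc.prems norm_ge_zero[of y] by linarith
    have sh: "shift T \<sigma> \<in> S" using fcs_shift[OF sys Suc.prems(2)] T by simp
    have n0: "real n * T \<ge> 0" using T by simp
    have "\<phi> (real (Suc n) * T) y \<sigma> = \<phi> (real n * T) (\<phi> T y \<sigma>) (shift T \<sigma>)"
      using fcs_cocycle[OF sys _ n0 Suc.prems(2), of T y] T
      by (simp add: algebra_simps)
    then have "norm (\<phi> (real (Suc n) * T) y \<sigma>) \<le> (1/2)^n * norm (\<phi> T y \<sigma>)"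
      using Suc.IH[OF h' sh] by simp
    also have "\<dots> \<le> (1/2)^n * (norm y / 2)" using h by (intro mult_left_mono) auto
    finally show ?case by simp
  qed
  define lam where "lam = ln 2 / T"
  have lam0: "lam > 0" unfolding lam_def using T by simp
  have "norm (\<phi> t x \<sigma>) \<le> (2 * C) * exp (- lam * t) * norm x"
    if x: "norm x \<le> r" and t: "t \<ge> 0" and \<sigma>: "\<sigma> \<in> S" for t x \<sigma>
  proof -
    define n where "n = nat \<lfloor>t / T\<rfloor>"
    have nle: "real n * T \<le> t"
    proof -
      have "real n \<le> t / T" unfolding n_def using t T by (simp add: of_nat_nat)
      then show ?thesis using T by (simp add: le_divide_eq)
    qed
    have ngt: "t < (real n + 1) * T"
    proof -
      have "t / T < real n + 1" unfolding n_def using t T by (simp add: of_nat_nat)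
      then show ?thesis using T by (simp add: divide_less_eq)
    qed
    have n0: "real n * T \<ge> 0" using T by simp
    have s0: "t - real n * T \<ge> 0" using nle by simp
    have it: "norm (\<phi> (real n * T) x \<sigma>) \<le> (1/2)^n * norm x" using iter x \<sigma> by blast
    have "(1/2::real)^n * norm x \<le> norm x" by (simp add: mult_left_le_one_le power_le_one)
    then have itr: "norm (\<phi> (real n * T) x \<sigma>) \<le> r" using it x by linarith
    have "\<phi> t x \<sigma> = \<phi> (t - real n * T) (\<phi> (real n * T) x \<sigma>) (shift (real n * T) \<sigma>)"
      using fcs_cocycle[OF sys n0 s0 \<sigma>, of x] by simp
    then have "norm (\<phi> t x \<sigma>) \<le> C * norm (\<phi> (real n * T) x \<sigma>)"
      using lin[OF itr fcs_shift[OF sys \<sigma> n0] s0] by simp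
    also have "\<dots> \<le> C * ((1/2)^n * norm x)" using it C by (intro mult_left_mono) auto
    also have "(1/2::real)^n \<le> 2 * exp (- lam * t)"
    proof -
      have e1: "exp (- lam * ((real n + 1) * T)) \<le> exp (- lam * t)"
        using ngt lam0 by simp
      have "exp (- lam * ((real n + 1) * T)) = exp (real (Suc n) * (- ln 2))"
        unfolding lam_def using T by (simp add: field_simps)
      also have "\<dots> = exp (- ln 2) ^ Suc n"
        by (rule exp_of_nat_mult)
      also have "exp (- ln (2::real)) = 1/2" by (simp add: exp_minus)
      finally have eq: "exp (- lam * ((real n + 1) * T)) = (1/2::real) ^ Suc n" .
      have "(1/2::real) ^ Suc n \<le> exp (- lam * t)" using e1 unfolding eq .
      moreover have "(1/2::real) ^ n = 2 * (1/2) ^ Suc n" by simp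
      ultimately show ?thesis by linarith
    qed
    then have "C * ((1/2)^n * norm x) \<le> C * ((2 * exp (- lam * t)) * norm x)"
      using C by (intro mult_left_mono mult_right_mono) auto
    also have "\<dots> = (2 * C) * exp (- lam * t) * norm x" by simp
    finally show ?thesis .
  qed
  then have H: "\<forall>t\<ge>0. \<forall>x. norm x \<le> r \<longrightarrow> (\<forall>\<sigma>\<in>S. norm (\<phi> t x \<sigma>) \<le> (2 * C) * exp (- lam * t) * norm x)"
    by blast
  have C2: "2 * C > 0" using C by simp
  show "\<exists>M>0. \<exists>lam>0. \<forall>t\<ge>0. \<forall>x. norm x \<le> r \<longrightarrow> (\<forall>\<sigma>\<in>S. norm (\<phi> t x \<sigma>) \<le> M * exp (- lam * t) * norm x)"
    apply (rule exI[of _ "2 * C"], rule conjI[OF C2])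
    apply (rule exI[of _ lam], rule conjI[OF lam0])
    by (rule H)
qed

end

lemma exp_nn_integral:
  fixes a :: real assumes a: "a > 0"
  shows "(\<integral>\<^sup>+ t. ennreal (exp (- a * t)) * indicator {0..} t \<partial>lborel) = ennreal (1 / a)"
proof -
  have "integral\<^sup>N lborel (\<lambda>t. ennreal (indicator {0..} t * exp (- a * t))) = ennreal (exp (- a * 0) / a)"
    using nn_integral_has_integral_lebesgue[of "{0..}" "\<lambda>t. exp (- a * t)" "exp (- a * 0) / a"]
      has_integral_exp_minus_to_infinity[OF a, of 0] by simp
  moreover have "(\<lambda>t. ennreal (indicator {0..} t * exp (- a * t))) = (\<lambda>t. ennreal (exp (- a * t)) * indicator {0..} t)"
    by (auto simp: fun_eq_iff split: split_indicator)
  ultimately show ?thesis by simp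
qed

lemma i_ii:
  fixes S :: "(real \<Rightarrow> 'q) set"
    and \<phi> :: "real \<Rightarrow> 'a::banach \<Rightarrow> (real \<Rightarrow> 'q) \<Rightarrow> 'a"
  assumes U: "USGES S \<phi>" and p: "p > 0"
  shows "\<exists>k. nondecr_nonneg k \<and> integral_bound S \<phi> p k"
proof -
  have "\<forall>n::nat. \<exists>M lam. M > 0 \<and> lam > 0 \<and> (\<forall>t\<ge>0. \<forall>x::'a. norm x \<le> real n + 1 \<longrightarrow>
      (\<forall>\<sigma>\<in>S. norm (\<phi> t x \<sigma>) \<le> M * exp (- lam * t) * norm x))"
  proof
    fix n :: nat
    have "real n + 1 > 0" by simp
    then show "\<exists>M lam. M > 0 \<and> lam > 0 \<and> (\<forall>t\<ge>0. \<forall>x::'a. norm x \<le> real n + 1 \<longrightarrow>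
      (\<forall>\<sigma>\<in>S. norm (\<phi> t x \<sigma>) \<le> M * exp (- lam * t) * norm x))"
      using U unfolding USGES_def by blast
  qed
  then obtain M lam where MLb: "\<And>n. M n > 0" "\<And>n. lam n > 0"
    "\<And>n t (x::'a) \<sigma>. t \<ge> 0 \<Longrightarrow> norm x \<le> real n + 1 \<Longrightarrow> \<sigma> \<in> S \<Longrightarrow> norm (\<phi> t x \<sigma>) \<le> M n * exp (- lam n * t) * norm x"
    by metis
  define c where "c n = (M n powr p / (lam n * p)) powr (1/p)" for n
  have c0: "c n \<ge> 0" for n unfolding c_def by simp
  define k :: "real \<Rightarrow> real" where "k s = (\<Sum>i\<le>nat \<lceil>s\<rceil>. c i)" for s
  have kmono: "nondecr_nonneg k"
    unfolding nondecr_nonneg_def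
  proof
    show "mono_on {0..} k"
    proof (rule mono_onI)
      fix a b :: real assume "a \<in> {0..}" "b \<in> {0..}" "a \<le> b"
      then have "nat \<lceil>a\<rceil> \<le> nat \<lceil>b\<rceil>" by (intro nat_mono ceiling_mono)
      then show "k a \<le> k b" unfolding k_def using c0 by (intro sum_mono2) auto
    qed
    show "\<forall>r\<ge>0. 0 \<le> k r" unfolding k_def using c0 by (simp add: sum_nonneg)
  qed
  have "integral_bound S \<phi> p k"
    unfolding integral_bound_def
  proof (intro allI ballI)
    fix x :: 'a and \<sigma> assume \<sigma>: "\<sigma> \<in> S"
    define N where "N = nat \<lceil>norm x\<rceil>"
    have xN: "norm x \<le> real N + 1" unfolding N_def by linarith
    define A where "A = M N powr p * norm x powr p"
    have A0: "A \<ge> 0" unfolding A_def by simp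
    have lp: "lam N * p > 0" using MLb(2) p by simp
    have "(\<integral>\<^sup>+ t \<in> {0..}. ennreal (norm (\<phi> t x \<sigma>) powr p) \<partial>lborel)
        \<le> (\<integral>\<^sup>+ t. ennreal A * (ennreal (exp (- (lam N * p) * t)) * indicator {0..} t) \<partial>lborel)"
    proof (rule nn_integral_mono)
      fix t :: real
      show "ennreal (norm (\<phi> t x \<sigma>) powr p) * indicator {0..} t
          \<le> ennreal A * (ennreal (exp (- (lam N * p) * t)) * indicator {0..} t)"
      proof (cases "t \<ge> 0")
        case True
        have "norm (\<phi> t x \<sigma>) powr p \<le> (M N * exp (- lam N * t) * norm x) powr p"
          using MLb(3)[OF True xN \<sigma>] p by (intro powr_mono2) auto
        also have "\<dots> = M N powr p * exp (- lam N * t) powr p * norm x powr p"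
          using MLb(1)[of N] by (simp add: powr_mult)
        also have "exp (- lam N * t) powr p = exp (- (lam N * p) * t)"
          unfolding exp_powr_real by (simp add: algebra_simps)
        finally have "norm (\<phi> t x \<sigma>) powr p \<le> A * exp (- (lam N * p) * t)"
          unfolding A_def by (simp add: ac_simps)
        then have "ennreal (norm (\<phi> t x \<sigma>) powr p) \<le> ennreal (A * exp (- (lam N * p) * t))"
          by (rule ennreal_leI)
        also have "\<dots> = ennreal A * ennreal (exp (- (lam N * p) * t))"
          by (rule ennreal_mult[OF A0]) simp
        finally show ?thesis using True by simp
      qed simp
    qed
    also have "\<dots> = ennreal A * (\<integral>\<^sup>+ t. ennreal (exp (- (lam N * p) * t)) * indicator {0..} t \<partial>lborel)"
      by (rule nn_integral_cmult) simp
    also have "\<dots> = ennreal (A * (1 / (lam N * p)))"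
      unfolding exp_nn_integral[OF lp] using ennreal_mult[OF A0, of "1 / (lam N * p)"] lp by simp
    also have "\<dots> \<le> ennreal (k (norm x) powr p * norm x powr p)"
    proof (rule ennreal_leI)
      have "c N \<le> (\<Sum>i\<le>N. c i)"
        by (rule member_le_sum) (use c0 in auto)
      then have "c N \<le> k (norm x)" unfolding k_def N_def .
      then have "c N powr p \<le> k (norm x) powr p" using c0 p by (intro powr_mono2) auto
      moreover have "c N powr p = M N powr p / (lam N * p)"
        unfolding c_def using p lp by (simp add: powr_powr)
      ultimately have "M N powr p / (lam N * p) \<le> k (norm x) powr p" by simp
      then have "M N powr p / (lam N * p) * norm x powr p \<le> k (norm x) powr p * norm x powr p"
        by (rule mult_right_mono) simp
      moreover have "A * (1 / (lam N * p)) = M N powr p / (lam N * p) * norm x powr p"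
        unfolding A_def by simp
      ultimately show "A * (1 / (lam N * p)) \<le> k (norm x) powr p * norm x powr p"
        by (metis)
    qed
    finally show "(\<integral>\<^sup>+ t \<in> {0..}. ennreal (norm (\<phi> t x \<sigma>) powr p) \<partial>lborel)
        \<le> ennreal (k (norm x) powr p * norm x powr p)" .
  qed
  then show ?thesis using kmono by blast
qed

theorem theorem2:
  fixes S :: "(real \<Rightarrow> 'q) set"
    and \<phi> :: "real \<Rightarrow> 'a::banach \<Rightarrow> (real \<Rightarrow> 'q) \<Rightarrow> 'a"
    and t1 G0 :: real and \<beta> :: "real \<Rightarrow> real"
  assumes sys: "forward_complete_system S \<phi>"
    and t1: "t1 > 0" and G0: "G0 > 0"
    and beta: "class_Kinf \<beta>"
    and beta_lim: "Limsup (at_right 0) (\<lambda>r. ereal (\<beta> r / r)) < \<infinity>"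
    and bound: "\<And>t x \<sigma>. t \<in> {0..t1} \<Longrightarrow> \<sigma> \<in> S \<Longrightarrow> norm (\<phi> t x \<sigma>) \<le> G0 * \<beta> (norm x)"
  shows "(USGES S \<phi> \<longleftrightarrow> (\<forall>p>0. \<exists>k. nondecr_nonneg k \<and> integral_bound S \<phi> p k))
       \<and> ((\<forall>p>0. \<exists>k. nondecr_nonneg k \<and> integral_bound S \<phi> p k)
            \<longleftrightarrow> (\<exists>p>0. \<exists>k. nondecr_nonneg k \<and> integral_bound S \<phi> p k))"
proof -
  have bK: "class_K \<beta>" using beta unfolding class_Kinf_def by simp
  have A: "\<forall>p>0. \<exists>k. nondecr_nonneg k \<and> integral_bound S \<phi> p k" if U: "USGES S \<phi>"
  proof (intro allI impI)
    fix p :: real assume "p > 0"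
    then show "\<exists>k. nondecr_nonneg k \<and> integral_bound S \<phi> p k" by (rule i_ii[OF U])
  qed
  have B: "USGES S \<phi>" if "\<exists>p>0. \<exists>k. nondecr_nonneg k \<and> integral_bound S \<phi> p k"
  proof -
    from that obtain p k where pk: "p > 0" "nondecr_nonneg k" "integral_bound S \<phi> p k" by blast
    show ?thesis using iii_USGES[OF sys t1 G0 bK beta_lim bound pk(1) pk(2) pk(3)] .
  qed
  have C: "(\<forall>p>0. \<exists>k. nondecr_nonneg k \<and> integral_bound S \<phi> p k) \<Longrightarrow> (\<exists>p>0. \<exists>k. nondecr_nonneg k \<and> integral_bound S \<phi> p k)"
  proof -
    assume H: "\<forall>p>0. \<exists>k. nondecr_nonneg k \<and> integral_bound S \<phi> p k"
    have "(1::real) > 0" by simp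
    with H show ?thesis by blast
  qed
  have D: "(\<exists>p>0. \<exists>k. nondecr_nonneg k \<and> integral_bound S \<phi> p k) \<Longrightarrow> (\<forall>p>0. \<exists>k. nondecr_nonneg k \<and> integral_bound S \<phi> p k)"
    using A B by blast
  show ?thesis
  proof (intro conjI iffI)
    show "\<forall>p>0. \<exists>k. nondecr_nonneg k \<and> integral_bound S \<phi> p k" if "USGES S \<phi>" using A[OF that] .
    show "USGES S \<phi>" if "\<forall>p>0. \<exists>k. nondecr_nonneg k \<and> integral_bound S \<phi> p k" using B[OF C[OF that]] .
    show "\<exists>p>0. \<exists>k. nondecr_nonneg k \<and> integral_bound S \<phi> p k" if "\<forall>p>0. \<exists>k. nondecr_nonneg k \<and> integral_bound S \<phi> p k" using C[OF that] .
    show "\<forall>p>0. \<exists>k. nondecr_nonneg k \<and> integral_bound S \<phi> p k" if "\<exists>p>0. \<exists>k. nondecr_nonneg k \<and> integral_bound S \<phi> p k" using D[OF that] .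
  qed
qed

end
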